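(* Let $p$ be odd, $R$ a Noetherian Banach–Tate $\mathbb{Z}_p$-algebra with multiplicative pseudo-uniformizer $\varpi$, and assume there is no $x\in R$ with $1<|x|<|\varpi|^{-1}$. Let $r\in[1/p,1)$, $t\ge1$, and let $f:\bigoplus_{i=1}^t\mathcal{D}^r\to\bigoplus_{i=1}^t\mathcal{D}^{r^{1/p}}$ be a norm-decreasing $R$-linear map, $\iota:\bigoplus_{i=1}^t\mathcal{D}^{r^{1/p}}\hookrightarrow\bigoplus_{i=1}^t\mathcal{D}^r$ the natural inclusion, and $U=\iota\circ f$ (a compact endomorphism of $M=\bigoplus_{i=1}^t\mathcal{D}^r$). Then $U(e^i_{r,\alpha})=\sum_{j,\beta}a^j_\beta e^j_{r,\beta}$ with $|a^j_\beta|\le|\varpi|^{n(r,\varpi,\beta)-n(r^{1/p},\varpi,\beta)}$ for all $j,\beta$. Moreover, defining $\lambda(0)=0$ and $\lambda(i+1)=\lambda(i)+n(r,\varpi,\lfloor i/t\rfloor)-n(r^{1/p},\varpi,\lfloor i/t\rfloor)$, the Fredholm determinant $\det(1-TU\mid M)=\sum_{n\ge0}c_nT^n\in R\{\{T\}\}$ satisfies $|c_n|\le|\varpi|^{\lambda(n)}$ for all $n$.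
   Context: A Banach–Tate $\mathbb{Z}_p$-algebra is a complete non-archimedean normed ring $R$ with a unit $\varpi$, $|\varpi|<1$, $|\varpi s|=|\varpi||s|$ for all $s$, and a ring map $\mathbb{Z}_p\to R$ with $|x|\le|x|_p$. For $s\in[1/p,1)$, $\mathcal{D}^s=\mathcal{D}^s(\mathbb{Z}_p,R)=\{\sum_{\alpha\ge0}d_\alpha\mathbf{n}^\alpha: d_\alpha\in R,\ |d_\alpha|s^\alpha\to0\}$ with norm $\sup_\alpha|d_\alpha|s^\alpha$, where $\mathbf{n}=\delta_1-1$ in the distribution algebra of $\mathbb{Z}_p$ (completion of the continuous $R$-valued distributions on $\mathbb{Z}_p$); $\mathcal{D}^{r^{1/p}}\subseteq\mathcal{D}^r$ naturally. Put $n(s,\varpi,\alpha)=\lfloor\alpha\log s/\log|\varpi|\rfloor$ and $e_{s,\alpha}=\varpi^{-n(s,\varpi,\alpha)}\mathbf{n}^\alpha$, a potential orthonormal basis of $\mathcal{D}^s$; $e^i_{s,\alpha}\in\bigoplus_{i=1}^t\mathcal{D}^s$ is $e_{s,\alpha}$ in the $i$-th summand. The basis of $M$ is ordered $e^1_{r,0},\dots,e^t_{r,0},e^1_{r,1},\dots$ (so the row indexed $i\ge0$ corresponds to $\alpha=\lfloor i/t\rfloor$). The Fredholm determinant of a compact operator on a potentially orthonormalizable Banach module is $\sum c_nT^n$ where $c_n=(-1)^n\sum$ of all principal $n\times n$ minors of the matrix of the operator in a potential orthonormal basis. *)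

theory Defs
  imports Complex_Main "HOL-Combinatorics.Permutations" "HOL-Computational_Algebra.Primes"
begin

definition padic_abs :: "nat \<Rightarrow> int \<Rightarrow> real" where
  "padic_abs p n = (if n = 0 then 0 else (1 / real p) ^ multiplicity (int p) n)"

definition is_ideal :: "'a::comm_ring_1 set \<Rightarrow> bool" where
  "is_ideal I \<longleftrightarrow> 0 \<in> I \<and> (\<forall>x\<in>I. \<forall>y\<in>I. x + y \<in> I) \<and> (\<forall>c. \<forall>x\<in>I. c * x \<in> I)"

definition noetherian :: "'a::comm_ring_1 itself \<Rightarrow> bool" where
  "noetherian _ \<longleftrightarrow> (\<forall>I::'a set. is_ideal I \<longrightarrow>
     (\<exists>F. finite F \<and> F \<subseteq> I \<and> I = {\<Sum>x\<in>F. c x * x | c. True}))"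

definition nonarch_normed_ring :: "('a::comm_ring_1 \<Rightarrow> real) \<Rightarrow> bool" where
  "nonarch_normed_ring nrm \<longleftrightarrow>
     (\<forall>x. 0 \<le> nrm x) \<and> (\<forall>x. nrm x = 0 \<longleftrightarrow> x = 0) \<and> (\<forall>x. nrm (- x) = nrm x) \<and>
     (\<forall>x y. nrm (x + y) \<le> max (nrm x) (nrm y)) \<and> (\<forall>x y. nrm (x * y) \<le> nrm x * nrm y)"

definition complete_nrm :: "('a::comm_ring_1 \<Rightarrow> real) \<Rightarrow> bool" where
  "complete_nrm nrm \<longleftrightarrow> (\<forall>X::nat \<Rightarrow> 'a.
     (\<forall>e>0. \<exists>N. \<forall>m\<ge>N. \<forall>n\<ge>N. nrm (X m - X n) < e) \<longrightarrow>
     (\<exists>L. (\<lambda>n. nrm (X n - L)) \<longlonglongrightarrow> 0))"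

(* A ring map Z_p -> R with |x| <= |x|_p exists (uniquely) iff
   |of_int n| <= |n|_p for all integers n (by completeness and density of Z). *)
definition banach_tate_Zp_alg :: "nat \<Rightarrow> ('a::comm_ring_1 \<Rightarrow> real) \<Rightarrow> 'a \<Rightarrow> bool" where
  "banach_tate_Zp_alg p nrm w \<longleftrightarrow>
     nonarch_normed_ring nrm \<and> complete_nrm nrm \<and>
     w dvd 1 \<and> nrm w < 1 \<and> (\<forall>s. nrm (w * s) = nrm w * nrm s) \<and>
     (\<forall>n::int. nrm (of_int n) \<le> padic_abs p n)"

definition uinv :: "'a::comm_ring_1 \<Rightarrow> 'a" where
  "uinv w = (SOME v. w * v = 1)"

definition ncoef :: "('a \<Rightarrow> real) \<Rightarrow> real \<Rightarrow> 'a \<Rightarrow> nat \<Rightarrow> int" where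
  "ncoef nrm s w \<alpha> = \<lfloor>real \<alpha> * ln s / ln (nrm w)\<rfloor>"

(* t-fold direct sum of D^s: element x i alpha = coefficient of n^alpha in summand i (0 <= i < t) *)
definition Dsum :: "('a::comm_ring_1 \<Rightarrow> real) \<Rightarrow> real \<Rightarrow> nat \<Rightarrow> (nat \<Rightarrow> nat \<Rightarrow> 'a) set" where
  "Dsum nrm s t = {x. (\<forall>i\<ge>t. \<forall>\<alpha>. x i \<alpha> = 0) \<and>
                      (\<forall>i<t. (\<lambda>\<alpha>. nrm (x i \<alpha>) * s ^ \<alpha>) \<longlonglongrightarrow> 0)}"

definition Dnorm :: "('a::comm_ring_1 \<Rightarrow> real) \<Rightarrow> real \<Rightarrow> nat \<Rightarrow> (nat \<Rightarrow> nat \<Rightarrow> 'a) \<Rightarrow> real" where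
  "Dnorm nrm s t x = Sup ({0} \<union> {nrm (x i \<alpha>) * s ^ \<alpha> | i \<alpha>. i < t})"

(* e^i_{s,alpha} = w^{-n(s,w,alpha)} n^alpha in the i-th summand *)
definition ebasis :: "('a::comm_ring_1 \<Rightarrow> real) \<Rightarrow> real \<Rightarrow> 'a \<Rightarrow> nat \<Rightarrow> nat \<Rightarrow> nat \<Rightarrow> nat \<Rightarrow> 'a" where
  "ebasis nrm s w i \<alpha> = (\<lambda>j \<beta>. if j = i \<and> \<beta> = \<alpha> then uinv w ^ nat (ncoef nrm s w \<alpha>) else 0)"

definition Rlinear_on :: "(nat \<Rightarrow> nat \<Rightarrow> 'a::comm_ring_1) set \<Rightarrow>
    ((nat \<Rightarrow> nat \<Rightarrow> 'a) \<Rightarrow> (nat \<Rightarrow> nat \<Rightarrow> 'a)) \<Rightarrow> bool" where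
  "Rlinear_on A f \<longleftrightarrow>
     (\<forall>x\<in>A. \<forall>y\<in>A. f (\<lambda>i \<alpha>. x i \<alpha> + y i \<alpha>) = (\<lambda>i \<alpha>. f x i \<alpha> + f y i \<alpha>)) \<and>
     (\<forall>c. \<forall>x\<in>A. f (\<lambda>i \<alpha>. c * x i \<alpha>) = (\<lambda>i \<alpha>. c * f x i \<alpha>))"

(* matrix of U in the basis e_{r,.} ordered e^1_{r,0},...,e^t_{r,0},e^1_{r,1},...;
   index k <-> summand k mod t, alpha = k div t. Entry (k,l) = coefficient of
   basis vector k in U(basis vector l). *)
definition Umat :: "('a::comm_ring_1 \<Rightarrow> real) \<Rightarrow> real \<Rightarrow> 'a \<Rightarrow> nat \<Rightarrow>
    ((nat \<Rightarrow> nat \<Rightarrow> 'a) \<Rightarrow> (nat \<Rightarrow> nat \<Rightarrow> 'a)) \<Rightarrow> nat \<Rightarrow> nat \<Rightarrow> 'a" where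
  "Umat nrm r w t U k l =
     U (ebasis nrm r w (l mod t) (l div t)) (k mod t) (k div t) * w ^ nat (ncoef nrm r w (k div t))"

definition pminor :: "(nat \<Rightarrow> nat \<Rightarrow> 'a::comm_ring_1) \<Rightarrow> nat set \<Rightarrow> 'a" where
  "pminor A S = (\<Sum>\<pi> | \<pi> permutes S. of_int (sign \<pi>) * (\<Prod>k\<in>S. A k (\<pi> k)))"

definition nrm_has_sum :: "('a::comm_ring_1 \<Rightarrow> real) \<Rightarrow> ('b \<Rightarrow> 'a) \<Rightarrow> 'b set \<Rightarrow> 'a \<Rightarrow> bool" where
  "nrm_has_sum nrm g A s \<longleftrightarrow> (\<forall>e>0. \<exists>F. finite F \<and> F \<subseteq> A \<and>
     (\<forall>G. finite G \<and> F \<subseteq> G \<and> G \<subseteq> A \<longrightarrow> nrm ((\<Sum>x\<in>G. g x) - s) < e))"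

definition is_fredholm_coeff :: "('a::comm_ring_1 \<Rightarrow> real) \<Rightarrow> (nat \<Rightarrow> nat \<Rightarrow> 'a) \<Rightarrow> nat \<Rightarrow> 'a \<Rightarrow> bool" where
  "is_fredholm_coeff nrm A n c \<longleftrightarrow>
     (\<exists>s. nrm_has_sum nrm (pminor A) {S. finite S \<and> card S = n} s \<and> c = (-1) ^ n * s)"

fun lam :: "('a \<Rightarrow> real) \<Rightarrow> real \<Rightarrow> nat \<Rightarrow> nat \<Rightarrow> 'a \<Rightarrow> nat \<Rightarrow> int" where
  "lam nrm r p t w 0 = 0"
| "lam nrm r p t w (Suc i) = lam nrm r p t w i + ncoef nrm r w (i div t)
      - ncoef nrm (r powr (1 / real p)) w (i div t)"

end

theory Submission
  imports Defs
begin

lemma powi_exp: "0 < (W::real) \<Longrightarrow> W powi n = exp (of_int n * ln W)"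
  by (metis exp_ln exp_power_int)

lemma powi_antimono: "0 < (W::real) \<Longrightarrow> W < 1 \<Longrightarrow> a \<le> b \<Longrightarrow> W powi b \<le> W powi a"
  by (simp add: powi_exp mult_right_mono_neg)

lemma floor_lemma:
  fixes u v :: real and p :: nat
  assumes "u \<le> v" "p \<ge> 1"
  shows "\<lfloor>v / p\<rfloor> - \<lfloor>u / p\<rfloor> \<le> \<lfloor>v\<rfloor> - \<lfloor>u\<rfloor>"
proof -
  define m where "m = \<lfloor>v / p\<rfloor>"
  define k where "k = \<lfloor>u / p\<rfloor>"
  have pp: "real p > 0" using assms by simp
  have km: "k \<le> m" unfolding m_def k_def using assms pp
    by (intro floor_mono) (simp add: divide_right_mono)
  have fu: "\<lfloor>u\<rfloor> \<le> \<lfloor>v\<rfloor>" using assms floor_mono by blast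
  show ?thesis
  proof (cases "m = k")
    case True then show ?thesis using fu unfolding m_def k_def by simp
  next
    case False
    have "real_of_int m \<le> v / p" unfolding m_def by simp
    hence "real_of_int (int p * m) \<le> v" using pp by (simp add: field_simps)
    hence a: "int p * m \<le> \<lfloor>v\<rfloor>" by (meson le_floor_iff)
    have "u / p < real_of_int k + 1" unfolding k_def by linarith
    hence "u < real_of_int (int p * (k + 1))" using pp by (simp add: field_simps)
    hence b: "\<lfloor>u\<rfloor> < int p * (k + 1)" by (meson floor_less_iff)
    have c0: "0 \<le> m - k - 1" using False km by simp
    have "1 * (m - k - 1) \<le> int p * (m - k - 1)"
      by (rule mult_right_mono) (use assms(2) c0 in auto)
    then have c: "int p * (m - k - 1) \<ge> m - k - 1" by simp
    have "int p * m - int p * (k+1) = int p * (m - k - 1)" by (simp add: algebra_simps)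
    then show ?thesis unfolding m_def[symmetric] k_def[symmetric] using a b c by linarith
  qed
qed

lemma sum_bound:
  assumes "nonarch_normed_ring nrm" "finite A" "0 \<le> B" "\<And>x. x \<in> A \<Longrightarrow> nrm (h x) \<le> B"
  shows "nrm (sum h A) \<le> B"
  using assms(2,4)
proof (induction A rule: finite_induct)
  case empty
  have "nrm 0 = 0" using assms(1) unfolding nonarch_normed_ring_def by blast
  then show ?case using assms(3) by simp
next
  case (insert a F)
  have "nrm (h a + sum h F) \<le> max (nrm (h a)) (nrm (sum h F))"
    using assms(1) by (simp add: nonarch_normed_ring_def)
  moreover have "nrm (sum h F) \<le> B" using insert.IH insert.prems by auto
  moreover have "nrm (h a) \<le> B" using insert.prems by auto
  ultimately show ?case using insert.hyps by simp
qed

lemma prod_bound: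
  assumes "nonarch_normed_ring nrm" "nrm 1 \<le> 1" "finite S"
  shows "nrm (prod h S) \<le> (\<Prod>k\<in>S. nrm (h k))"
  using assms(3)
proof (induction S rule: finite_induct)
  case empty then show ?case using assms by simp
next
  case (insert a F)
  have nn: "\<And>x. 0 \<le> nrm x" using assms(1) by (simp add: nonarch_normed_ring_def)
  have "nrm (h a * prod h F) \<le> nrm (h a) * nrm (prod h F)"
    using assms(1) by (simp add: nonarch_normed_ring_def)
  also have "\<dots> \<le> nrm (h a) * (\<Prod>k\<in>F. nrm (h k))" using insert nn by (simp add: mult_left_mono)
  finally show ?case using insert by simp
qed

lemma sum_card_mono:
  fixes g :: "nat \<Rightarrow> int"
  assumes "mono g" "finite S" "card S = n"
  shows "sum g {..<n} \<le> sum g S"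
  using assms(2,3)
proof (induction n arbitrary: S)
  case 0 then show ?case by simp
next
  case (Suc n)
  have ne: "S \<noteq> {}" using Suc.prems by auto
  define m where "m = Max S"
  have mS: "m \<in> S" unfolding m_def using Suc.prems(1) ne by (rule Max_in)
  have Sm: "S \<subseteq> {..m}" unfolding m_def using Suc.prems(1) by auto
  have "card S \<le> Suc m" using card_mono[OF finite_atMost Sm] by simp
  hence nm: "n \<le> m" using Suc.prems by simp
  have c: "card (S - {m}) = n" using Suc.prems mS by simp
  have "sum g {..<Suc n} = sum g {..<n} + g n" by simp
  also have "\<dots> \<le> sum g (S - {m}) + g m" using Suc.IH[OF _ c] Suc.prems assms(1) nm
    by (simp add: add_mono monoD)
  also have "\<dots> = sum g S" using Suc.prems mS by (simp add: sum.remove)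
  finally show ?case .
qed

lemma Dsum_le_Dnorm:
  assumes "x \<in> Dsum nrm s t" "j < t"
  shows "nrm (x j \<beta>) * s ^ \<beta> \<le> Dnorm nrm s t x"
proof -
  have "\<forall>i. \<exists>K. i < t \<longrightarrow> (\<forall>\<alpha>. nrm (x i \<alpha>) * s ^ \<alpha> \<le> K)"
  proof (intro allI)
    fix i
    show "\<exists>K. i < t \<longrightarrow> (\<forall>\<alpha>. nrm (x i \<alpha>) * s ^ \<alpha> \<le> K)"
    proof (cases "i < t")
      case True
      then have "(\<lambda>\<alpha>. nrm (x i \<alpha>) * s ^ \<alpha>) \<longlonglongrightarrow> 0" using assms(1) by (simp add: Dsum_def)
      then have "Bseq (\<lambda>\<alpha>. nrm (x i \<alpha>) * s ^ \<alpha>)" by (rule convergent_imp_Bseq[OF convergentI])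
      then have "\<exists>K>0. \<forall>\<alpha>. norm (nrm (x i \<alpha>) * s ^ \<alpha>) \<le> K" by (simp only: Bseq_def)
      then obtain K where "\<forall>\<alpha>. \<bar>nrm (x i \<alpha>) * s ^ \<alpha>\<bar> \<le> K" by (auto simp only: real_norm_def)
      then have "\<forall>\<alpha>. nrm (x i \<alpha>) * s ^ \<alpha> \<le> K" by (simp add: abs_le_iff)
      then show ?thesis by blast
    qed simp
  qed
  then obtain K where K0: "\<forall>i. i < t \<longrightarrow> (\<forall>\<alpha>. nrm (x i \<alpha>) * s ^ \<alpha> \<le> K i)"
    using choice[of "\<lambda>i K. i < t \<longrightarrow> (\<forall>\<alpha>. nrm (x i \<alpha>) * s ^ \<alpha> \<le> K)"] by blast
  define B where "B = (\<Sum>i<t. \<bar>K i\<bar>)"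
  have KB: "\<And>i. i < t \<Longrightarrow> K i \<le> B"
  proof -
    fix i assume "i < t"
    have "\<bar>K i\<bar> \<le> B" unfolding B_def by (rule member_le_sum) (use \<open>i < t\<close> in auto)
    then show "K i \<le> B" by linarith
  qed
  have B0: "0 \<le> B" unfolding B_def by (simp add: sum_nonneg)
  have bdd: "bdd_above ({0} \<union> {nrm (x i \<alpha>) * s ^ \<alpha> | i \<alpha>. i < t})"
    unfolding bdd_above_def
  proof (intro exI[of _ B] ballI)
    fix y assume "y \<in> {0} \<union> {nrm (x i \<alpha>) * s ^ \<alpha> | i \<alpha>. i < t}"
    then consider "y = 0" | i \<alpha> where "y = nrm (x i \<alpha>) * s ^ \<alpha>" "i < t" by blast
    then show "y \<le> B"
    proof cases
      case 1 then show ?thesis using B0 by simp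
    next
      case (2 i \<alpha>)
      then have "y \<le> K i" using K0 by blast
      then show ?thesis using KB[OF 2(2)] by linarith
    qed
  qed
  have mem: "nrm (x j \<beta>) * s ^ \<beta> \<in> {0} \<union> {nrm (x i \<alpha>) * s ^ \<alpha> | i \<alpha>. i < t}"
    using assms(2) by blast
  show ?thesis unfolding Dnorm_def by (rule cSup_upper[OF mem bdd])
qed

lemma prod_powi:
  assumes "(W::real) \<noteq> 0" "finite S" shows "(\<Prod>k\<in>S. W powi g k) = W powi (sum g S)"
  using assms(2) by (induction S rule: finite_induct) (simp_all add: power_int_add assms(1))

lemma pow_exp: "0 < (x::real) \<Longrightarrow> x ^ n = exp (real n * ln x)"
  by (subst exp_of_nat_mult) simp

theorem mainTheorem14:
  fixes p t :: nat and r :: real and nrm :: "'a::comm_ring_1 \<Rightarrow> real" and w :: 'a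
    and f :: "(nat \<Rightarrow> nat \<Rightarrow> 'a) \<Rightarrow> (nat \<Rightarrow> nat \<Rightarrow> 'a)"
  assumes "prime p" and "odd p"
    and "banach_tate_Zp_alg p nrm w"
    and "noetherian TYPE('a)"
    and "\<not> (\<exists>x. 1 < nrm x \<and> nrm x < 1 / nrm w)"
    and "1 / real p \<le> r" and "r < 1"
    and "t \<ge> 1"
    and "\<forall>x\<in>Dsum nrm r t. f x \<in> Dsum nrm (r powr (1 / real p)) t"
    and "Rlinear_on (Dsum nrm r t) f"
    and "\<forall>x\<in>Dsum nrm r t. Dnorm nrm (r powr (1 / real p)) t (f x) \<le> Dnorm nrm r t x"
  shows "(\<forall>i<t. \<forall>\<alpha>. \<forall>j<t. \<forall>\<beta>.
            nrm (f (ebasis nrm r w i \<alpha>) j \<beta> * w ^ nat (ncoef nrm r w \<beta>))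
              \<le> nrm w powi (ncoef nrm r w \<beta> - ncoef nrm (r powr (1 / real p)) w \<beta>))
       \<and> (\<forall>n. \<exists>c. is_fredholm_coeff nrm (Umat nrm r w t f) n c
                  \<and> nrm c \<le> nrm w powi lam nrm r p t w n)"
proof -
  note bt = assms(3)[unfolded banach_tate_Zp_alg_def]
  have nr: "nonarch_normed_ring nrm" and cpl: "complete_nrm nrm" and wu: "w dvd 1"
    and w1: "nrm w < 1" and wm: "\<And>s. nrm (w * s) = nrm w * nrm s" using bt by auto
  have nn: "\<And>x. 0 \<le> nrm x" and n0: "\<And>x. nrm x = 0 \<longleftrightarrow> x = 0" and nneg: "\<And>x. nrm (-x) = nrm x"
    and ntri: "\<And>x y. nrm (x+y) \<le> max (nrm x) (nrm y)" and nmul: "\<And>x y. nrm (x*y) \<le> nrm x * nrm y"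
    using nr unfolding nonarch_normed_ring_def by auto
  have nz: "nrm 0 = 0" using n0 by simp
  define W where "W = nrm w"
  define s where "s = r powr (1 / real p)"
  show ?thesis
  proof (cases "W = 0")
    case True
    then have "w = 0" using n0 W_def by simp
    then have "(1::'a) = 0" using wu by simp
    then have z: "\<And>x::'a. x = 0" by (metis mult_1 mult_zero_left)
    then have zn: "\<And>x::'a. nrm x = 0" using nz by metis
    have pw: "\<And>k. 0 \<le> nrm w powi k" using True W_def by (simp add: power_int_0_left_if)
    have fc: "\<And>n. is_fredholm_coeff nrm (Umat nrm r w t f) n 0"
      unfolding is_fredholm_coeff_def nrm_has_sum_def
      by (rule exI[of _ 0]) (auto simp: zn intro!: exI[of _ "{}"])
    show ?thesis using zn pw fc by auto
  next
    case False
    have Wp: "0 < W" using False nn[of w] W_def by linarith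
    have W1: "W < 1" using w1 W_def by simp
    have lW: "ln W < 0" using Wp W1 by simp
    have n1: "nrm 1 = 1" using wm[of 1] False W_def by simp
    define v where "v = uinv w"
    have wv: "w * v = 1"
    proof -
      obtain k where "1 = w * k" using wu by (auto elim: dvdE)
      then have "\<exists>v. w * v = 1" by metis
      then show ?thesis unfolding v_def uinv_def by (rule someI_ex)
    qed
    have wpow: "\<And>k x. nrm (w ^ k * x) = W ^ k * nrm x"
    proof -
      fix k x show "nrm (w ^ k * x) = W ^ k * nrm x"
        by (induction k) (auto simp: wm W_def mult.assoc)
    qed
    have vpow: "\<And>k. nrm (v ^ k) = 1 / W ^ k"
    proof -
      fix k
      have "W ^ k * nrm (v ^ k) = 1" using wpow[of k "v ^ k"] n1
        by (simp add: power_mult_distrib[symmetric] wv)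
      then show "nrm (v ^ k) = 1 / W ^ k" using Wp by (simp add: field_simps)
    qed
    have p2: "p \<ge> 2" using assms(1) prime_ge_2_nat by blast
    have "0 < 1 / real p" using p2 by simp
    then have rp: "0 < r" using assms(6) by linarith
    have lr: "ln r < 0" using rp assms(7) by simp
    have lns: "ln s = ln r / real p" unfolding s_def using rp by (simp add: ln_powr)
    have sp: "0 < s" unfolding s_def using rp by simp
    define a where "a = ln r / ln W"
    have ap: "0 < a" unfolding a_def using lr lW by (simp add: divide_neg_neg)
    have ncr: "\<And>\<beta>. ncoef nrm r w \<beta> = \<lfloor>real \<beta> * a\<rfloor>"
      unfolding ncoef_def a_def W_def by simp
    have ncs: "\<And>\<beta>. ncoef nrm s w \<beta> = \<lfloor>real \<beta> * a / real p\<rfloor>"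
      unfolding ncoef_def a_def W_def lns by (simp add: mult.commute)
    have ncr0: "\<And>\<beta>. 0 \<le> ncoef nrm r w \<beta>" using ncr ap by simp
    have ncs0: "\<And>\<beta>. 0 \<le> ncoef nrm s w \<beta>" using ncs ap by simp
    have Wpow: "\<And>k::int. 0 \<le> k \<Longrightarrow> W ^ nat k = exp (of_int k * ln W)"
      using Wp by (metis power_int_nonneg_exp powi_exp)
    have rpow: "\<And>\<alpha>. r ^ \<alpha> = exp (real \<alpha> * a * ln W)"
      unfolding a_def using lW rp by (simp add: pow_exp)
    have spow: "\<And>\<beta>. s ^ \<beta> = exp (real \<beta> * a / real p * ln W)"
      using lW sp p2 by (simp add: pow_exp lns a_def)
    have part1: "\<And>i \<alpha> j \<beta>. i < t \<Longrightarrow> j < t \<Longrightarrow>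
        nrm (f (ebasis nrm r w i \<alpha>) j \<beta> * w ^ nat (ncoef nrm r w \<beta>))
          \<le> W powi (ncoef nrm r w \<beta> - ncoef nrm s w \<beta>)"
    proof -
      fix i \<alpha> j \<beta> assume it: "i < t" and jt: "j < t"
      define x where "x = ebasis nrm r w i \<alpha>"
      have xD: "x \<in> Dsum nrm r t"
        unfolding Dsum_def
      proof (intro CollectI conjI allI impI)
        fix i' \<alpha>' assume "t \<le> i'" then show "x i' \<alpha>' = 0" using it by (simp add: x_def ebasis_def)
      next
        fix i' assume "i' < t"
        show "(\<lambda>\<alpha>'. nrm (x i' \<alpha>') * r ^ \<alpha>') \<longlonglongrightarrow> 0"
          by (rule tendsto_eventually, rule eventually_sequentially[THEN iffD2], rule exI[of _ "Suc \<alpha>"])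
             (auto simp: x_def ebasis_def nz)
      qed
      have xn: "Dnorm nrm r t x \<le> 1"
        unfolding Dnorm_def
      proof (rule cSup_least)
        fix y assume "y \<in> {0} \<union> {nrm (x i' \<alpha>') * r ^ \<alpha>' |i' \<alpha>'. i' < t}"
        then obtain i' \<alpha>' where y: "y = 0 \<or> y = nrm (x i' \<alpha>') * r ^ \<alpha>'" by blast
        have key: "r ^ \<alpha> \<le> W ^ nat (ncoef nrm r w \<alpha>)"
        proof -
          have "real_of_int (ncoef nrm r w \<alpha>) * ln W \<ge> real \<alpha> * a * ln W"
            using ncr[of \<alpha>] lW by (simp add: mult_right_mono_neg)
          then show ?thesis using Wpow[OF ncr0[of \<alpha>]] rpow[of \<alpha>] by simp
        qed
        have "nrm (x i' \<alpha>') * r ^ \<alpha>' \<le> 1"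
        proof (cases "i' = i \<and> \<alpha>' = \<alpha>")
          case True
          then have "nrm (x i' \<alpha>') * r ^ \<alpha>' = r ^ \<alpha> / W ^ nat (ncoef nrm r w \<alpha>)"
            using vpow by (simp add: x_def ebasis_def v_def[symmetric])
          moreover have "r ^ \<alpha> / W ^ nat (ncoef nrm r w \<alpha>) \<le> 1" using key Wp by (simp add: divide_le_eq)
          ultimately show ?thesis by linarith
        next
          case False then show ?thesis by (auto simp: x_def ebasis_def nz)
        qed
        then show "y \<le> 1" using y by auto
      qed auto
      have fD: "f x \<in> Dsum nrm s t" using assms(9) xD s_def by simp
      have fn: "Dnorm nrm s t (f x) \<le> 1" using assms(11) xD xn s_def by force
      have bd: "nrm (f x j \<beta>) * s ^ \<beta> \<le> 1" using Dsum_le_Dnorm[OF fD jt, of \<beta>] fn by simp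
      define m where "m = ncoef nrm s w \<beta>"
      define n where "n = ncoef nrm r w \<beta>"
      define z where "z = real \<beta> * a / real p"
      have mz: "real_of_int m \<le> z" "z < real_of_int m + 1" unfolding m_def z_def ncs by linarith+
      have m0: "0 \<le> m" using ncs0 m_def by simp
      have n0': "0 \<le> n" using ncr0 n_def by simp
      have sz: "s ^ \<beta> = exp (z * ln W)" using spow z_def by simp
      define X where "X = w ^ nat m * f x j \<beta>"
      have nX: "nrm X = W ^ nat m * nrm (f x j \<beta>)" using wpow X_def by simp
      have spos: "0 < s ^ \<beta>" using sp by simp
      have fle: "nrm (f x j \<beta>) \<le> 1 / s ^ \<beta>" using bd spos by (simp add: field_simps)
      have "W ^ nat m * W < s ^ \<beta>"
      proof -
        have "W ^ nat m * W = exp ((real_of_int m + 1) * ln W)"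
          using Wpow[OF m0] Wp by (simp add: distrib_right exp_add)
        also have "\<dots> < exp (z * ln W)" using mz lW by (simp add: mult_strict_right_mono_neg)
        finally show ?thesis using sz by simp
      qed
      then have "W ^ nat m / s ^ \<beta> < 1 / W" using Wp spos by (simp add: field_simps)
      moreover have "nrm X \<le> W ^ nat m / s ^ \<beta>" using nX fle Wp
        by (metis (no_types, lifting) divide_inverse mult_left_mono mult_1_right inverse_eq_divide zero_le_power order_less_imp_le)
      ultimately have "nrm X < 1 / nrm w" using W_def by simp
      then have Xle: "nrm X \<le> 1" using assms(5) by force
      have "nrm (f x j \<beta> * w ^ nat n) = W ^ nat n * nrm (f x j \<beta>)" using wpow[of "nat n" "f x j \<beta>"] by (simp only: mult.commute)
      also have "\<dots> \<le> W ^ nat n * (1 / W ^ nat m)"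
        using Xle nX Wp by (intro mult_left_mono) (auto simp: field_simps)
      also have "\<dots> = W powi (n - m)" using Wp m0 n0' by (simp add: power_int_diff power_int_nonneg_exp[symmetric])
      finally show "nrm (f (ebasis nrm r w i \<alpha>) j \<beta> * w ^ nat (ncoef nrm r w \<beta>))
          \<le> W powi (ncoef nrm r w \<beta> - ncoef nrm s w \<beta>)" unfolding x_def m_def n_def by simp
    qed
    define d where "d = (\<lambda>\<beta>::nat. \<lfloor>real \<beta> * a\<rfloor> - \<lfloor>real \<beta> * a / real p\<rfloor>)"
    define g where "g = (\<lambda>k. d (k div t))"
    have gdef: "\<And>k. g k = ncoef nrm r w (k div t) - ncoef nrm s w (k div t)"
      unfolding g_def d_def ncr ncs by simp
    have dmono: "mono d"
    proof (rule incseq_SucI)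
      fix \<beta>
      have "\<lfloor>real (Suc \<beta>) * a / real p\<rfloor> - \<lfloor>real \<beta> * a / real p\<rfloor> \<le> \<lfloor>real (Suc \<beta>) * a\<rfloor> - \<lfloor>real \<beta> * a\<rfloor>"
        using floor_lemma[of "real \<beta> * a" "real (Suc \<beta>) * a" p] ap p2 by (simp add: distrib_right)
      then show "d \<beta> \<le> d (Suc \<beta>)" unfolding d_def by linarith
    qed
    have gmono: "mono g" unfolding g_def using dmono by (simp add: mono_def div_le_mono)
    have g0: "\<And>k. 0 \<le> g k"
    proof -
      fix k have "d 0 \<le> d (k div t)" using dmono by (simp add: monoD)
      then show "0 \<le> g k" by (simp add: g_def d_def)
    qed
    have gunb: "\<And>M::int. \<exists>N. M \<le> g N"
    proof -
      fix M :: int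
      define \<beta> where "\<beta> = nat \<lceil>2 * (real_of_int M + 1) / a\<rceil>"
      have "2 * (real_of_int M + 1) / a \<le> real \<beta>" unfolding \<beta>_def by linarith
      then have h1: "real_of_int M + 1 \<le> real \<beta> * a / 2" using ap by (simp add: field_simps)
      have h2: "real \<beta> * a / real p \<le> real \<beta> * a / 2" using p2 ap
        by (intro divide_left_mono) auto
      have "real_of_int M < real_of_int (d \<beta>)" unfolding d_def using h1 h2 by linarith
      then have "M \<le> d \<beta>" by simp
      moreover have "(t * \<beta>) div t = \<beta>" using assms(8) by simp
      ultimately show "\<exists>N. M \<le> g N" unfolding g_def by metis
    qed
    have lamg: "\<And>n. lam nrm r p t w n = sum g {..<n}"
    proof -
      fix n show "lam nrm r p t w n = sum g {..<n}"
        by (induction n) (simp_all add: gdef s_def)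
    qed
    define U where "U = Umat nrm r w t f"
    have entry: "\<And>k l. nrm (U k l) \<le> W powi g k"
      unfolding U_def Umat_def gdef using part1 assms(8) by simp
    have minor: "\<And>S. finite S \<Longrightarrow> nrm (pminor U S) \<le> W powi (sum g S)"
    proof -
      fix S :: "nat set" assume fS: "finite S"
      show "nrm (pminor U S) \<le> W powi (sum g S)" unfolding pminor_def
      proof (rule sum_bound[OF nr])
        show "finite {\<pi>. \<pi> permutes S}" using fS by (rule finite_permutations)
        show "0 \<le> W powi sum g S" using Wp by simp
        fix \<pi> assume "\<pi> \<in> {\<pi>. \<pi> permutes S}"
        have "nrm (\<Prod>k\<in>S. U k (\<pi> k)) \<le> (\<Prod>k\<in>S. nrm (U k (\<pi> k)))" using prod_bound[OF nr _ fS] n1 by simp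
        also have "\<dots> \<le> (\<Prod>k\<in>S. W powi g k)" by (intro prod_mono) (auto simp: nn entry)
        also have "\<dots> = W powi sum g S" using prod_powi[OF False fS] .
        finally have *: "nrm (\<Prod>k\<in>S. U k (\<pi> k)) \<le> W powi sum g S" .
        have "nrm (of_int (sign \<pi>) * (\<Prod>k\<in>S. U k (\<pi> k))) = nrm (\<Prod>k\<in>S. U k (\<pi> k))"
          by (cases "evenperm \<pi>") (auto simp: sign_def nneg)
        then show "nrm (of_int (sign \<pi>) * (\<Prod>k\<in>S. U k (\<pi> k))) \<le> W powi sum g S" using * by simp
      qed
    qed
    have minor_lam: "\<And>S n. finite S \<Longrightarrow> card S = n \<Longrightarrow> nrm (pminor U S) \<le> W powi lam nrm r p t w n"
    proof -
      fix S :: "nat set" and n :: nat assume "finite S" "card S = n"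
      then have "sum g {..<n} \<le> sum g S" using sum_card_mono gmono by blast
      then have "W powi sum g S \<le> W powi sum g {..<n}" using powi_antimono Wp W1 by blast
      then show "nrm (pminor U S) \<le> W powi lam nrm r p t w n" using minor \<open>finite S\<close> lamg by (metis order_trans)
    qed
    have minor_tail: "\<And>S k N. finite S \<Longrightarrow> k \<in> S \<Longrightarrow> N \<le> k \<Longrightarrow> nrm (pminor U S) \<le> W powi g N"
    proof -
      fix S :: "nat set" and k N :: nat assume fS: "finite S" and kS: "k \<in> S" and Nk: "N \<le> k"
      have "g N \<le> g k" using gmono Nk by (simp add: monoD)
      also have "g k \<le> sum g S" using fS kS g0 by (intro member_le_sum) auto
      finally have "W powi sum g S \<le> W powi g N" using powi_antimono Wp W1 by blast
      then show "nrm (pminor U S) \<le> W powi g N" using minor fS by (metis order_trans)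
    qed
    have small: "\<And>e. 0 < e \<Longrightarrow> \<exists>N0. \<forall>N\<ge>N0. W powi g N < e"
    proof -
      fix e :: real assume "0 < e"
      obtain K where K: "W ^ K < e" using real_arch_pow_inv[OF \<open>0 < e\<close> W1] by blast
      obtain N0 where N0: "int K \<le> g N0" using gunb by blast
      have "\<forall>N\<ge>N0. W powi g N < e"
      proof (intro allI impI)
        fix N assume "N0 \<le> N"
        then have "int K \<le> g N" using N0 gmono by (meson monoD order_trans)
        then have "W powi g N \<le> W powi int K" using powi_antimono Wp W1 by blast
        then show "W powi g N < e" using K by simp
      qed
      then show "\<exists>N0. \<forall>N\<ge>N0. W powi g N < e" by blast
    qed
    have part2: "\<And>n. \<exists>c. is_fredholm_coeff nrm U n c \<and> nrm c \<le> W powi lam nrm r p t w n"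
    proof -
      fix n
      define A where "A = {S::nat set. finite S \<and> card S = n}"
      define Fam where "Fam = (\<lambda>N. {S::nat set. S \<subseteq> {..<N} \<and> card S = n})"
      define T where "T = (\<lambda>N. sum (pminor U) (Fam N))"
      have Ffin: "finite (Fam N)" for N
        unfolding Fam_def by (rule finite_subset[of _ "Pow {..<N}"]) auto
      have FA: "\<And>N. Fam N \<subseteq> A" unfolding Fam_def A_def using finite_subset by blast
      have Fmono: "\<And>N M. N \<le> M \<Longrightarrow> Fam N \<subseteq> Fam M" unfolding Fam_def by auto
      have tail: "\<And>S N. S \<in> A - Fam N \<Longrightarrow> nrm (pminor U S) \<le> W powi g N"
      proof -
        fix S N assume "S \<in> A - Fam N"
        then have "finite S" "\<not> S \<subseteq> {..<N}" unfolding A_def Fam_def by auto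
        then obtain k where "k \<in> S" "N \<le> k" "finite S" by (meson lessThan_iff not_le subsetI)
        then show "nrm (pminor U S) \<le> W powi g N" using minor_tail by blast
      qed
      have diffb: "\<And>N M. N \<le> M \<Longrightarrow> nrm (T M - T N) \<le> W powi g N"
      proof -
        fix N M :: nat assume "N \<le> M"
        then have eq: "T M - T N = sum (pminor U) (Fam M - Fam N)"
          unfolding T_def using Fmono Ffin by (simp add: sum_diff)
        have "nrm (sum (pminor U) (Fam M - Fam N)) \<le> W powi g N"
        proof (rule sum_bound[OF nr])
          show "finite (Fam M - Fam N)" using Ffin by simp
          show "0 \<le> W powi g N" using Wp by simp
          fix S assume "S \<in> Fam M - Fam N"
          then have "S \<in> A - Fam N" using FA by blast
          then show "nrm (pminor U S) \<le> W powi g N" by (rule tail)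
        qed
        then show "nrm (T M - T N) \<le> W powi g N" using eq by simp
      qed
      have cauchy: "\<forall>e>0. \<exists>N. \<forall>m\<ge>N. \<forall>k\<ge>N. nrm (T m - T k) < e"
      proof (intro allI impI)
        fix e :: real assume "0 < e"
        then obtain N0 where N0: "\<forall>N\<ge>N0. W powi g N < e" using small by blast
        have "\<forall>m\<ge>N0. \<forall>k\<ge>N0. nrm (T m - T k) < e"
        proof (intro allI impI)
          fix m k assume "N0 \<le> m" "N0 \<le> k"
          show "nrm (T m - T k) < e"
          proof (cases "k \<le> m")
            case True then show ?thesis using diffb N0 \<open>N0 \<le> k\<close> by (meson order_le_less_trans)
          next
            case False
            then have "nrm (T k - T m) < e" using diffb N0 \<open>N0 \<le> m\<close> by (meson order_le_less_trans nat_le_linear)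
            moreover have "T m - T k = - (T k - T m)" by simp
            ultimately show ?thesis using nneg by metis
          qed
        qed
        then show "\<exists>N. \<forall>m\<ge>N. \<forall>k\<ge>N. nrm (T m - T k) < e" by blast
      qed
      obtain L where L: "(\<lambda>N. nrm (T N - L)) \<longlonglongrightarrow> 0" using cpl[unfolded complete_nrm_def, THEN spec[of _ T], THEN mp, OF cauchy] by blast
      have Lev: "\<And>e. 0 < e \<Longrightarrow> \<exists>N1. \<forall>N\<ge>N1. nrm (T N - L) < e"
      proof -
        fix e :: real assume "0 < e"
        from L[unfolded LIMSEQ_iff, rule_format, OF this] obtain N1 where "\<forall>N\<ge>N1. norm (nrm (T N - L) - 0) < e" by blast
        then show "\<exists>N1. \<forall>N\<ge>N1. nrm (T N - L) < e" using nn by auto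
      qed
      have hs: "nrm_has_sum nrm (pminor U) A L"
        unfolding nrm_has_sum_def
      proof (intro allI impI)
        fix e :: real assume e: "0 < e"
        obtain N1 where N1: "\<forall>N\<ge>N1. nrm (T N - L) < e" using Lev[OF e] by blast
        obtain N0 where N0: "\<forall>N\<ge>N0. W powi g N < e" using small[OF e] by blast
        define N where "N = max N0 N1"
        have "\<forall>G. finite G \<and> Fam N \<subseteq> G \<and> G \<subseteq> A \<longrightarrow> nrm (sum (pminor U) G - L) < e"
        proof (intro allI impI)
          fix G assume G: "finite G \<and> Fam N \<subseteq> G \<and> G \<subseteq> A"
          have eqG: "sum (pminor U) G - L = (T N - L) + sum (pminor U) (G - Fam N)"
            unfolding T_def using G by (simp add: sum.subset_diff[of "Fam N" G])
          moreover have "nrm (sum (pminor U) (G - Fam N)) \<le> W powi g N"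
          proof (rule sum_bound[OF nr])
            show "finite (G - Fam N)" using G by simp
            show "0 \<le> W powi g N" using Wp by simp
            fix S assume "S \<in> G - Fam N"
            then have "S \<in> A - Fam N" using G by blast
            then show "nrm (pminor U S) \<le> W powi g N" by (rule tail)
          qed
          moreover have "nrm (T N - L) < e" using N1 N_def by simp
          moreover have "W powi g N < e" using N0 N_def by simp
          ultimately show "nrm (sum (pminor U) G - L) < e" using ntri[of "T N - L" "sum (pminor U) (G - Fam N)"]
            unfolding eqG by (simp only: max_less_iff_conj)
        qed
        then have "finite (Fam N) \<and> Fam N \<subseteq> A \<and> (\<forall>G. finite G \<and> Fam N \<subseteq> G \<and> G \<subseteq> A \<longrightarrow> nrm (sum (pminor U) G - L) < e)"
          using Ffin[of N] FA[of N] by blast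
        then show "\<exists>F. finite F \<and> F \<subseteq> A \<and> (\<forall>G. finite G \<and> F \<subseteq> G \<and> G \<subseteq> A \<longrightarrow> nrm (sum (pminor U) G - L) < e)"
          by (rule exI)
      qed
      define B where "B = W powi lam nrm r p t w n"
      have Bp: "0 < B" unfolding B_def using Wp by simp
      have TB: "\<And>N. nrm (T N) \<le> B"
        unfolding T_def
      proof (rule sum_bound[OF nr])
        fix N show "finite (Fam N)" by (rule Ffin)
        show "0 \<le> B" using Bp by simp
        fix S assume "S \<in> Fam N"
        then have "finite S" "card S = n" unfolding Fam_def using finite_subset by auto
        then show "nrm (pminor U S) \<le> B" unfolding B_def by (rule minor_lam)
      qed
      obtain N1 where N1: "nrm (T N1 - L) < B" using Lev[OF Bp] by blast
      have "L = T N1 + (- (T N1 - L))" by simp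
      then have "nrm L \<le> max (nrm (T N1)) (nrm (- (T N1 - L)))" using ntri[of "T N1" "- (T N1 - L)"] by simp
      then have LB: "nrm L \<le> B" using TB[of N1] N1 nneg[of "T N1 - L"] by simp
      define c where "c = (-1) ^ n * L"
      have "nrm c = nrm L" unfolding c_def by (cases "even n") (auto simp: nneg)
      moreover have "is_fredholm_coeff nrm U n c" unfolding is_fredholm_coeff_def c_def
        using hs A_def by blast
      ultimately show "\<exists>c. is_fredholm_coeff nrm U n c \<and> nrm c \<le> W powi lam nrm r p t w n"
        using LB B_def by auto
    qed
    show ?thesis using part1 part2 unfolding U_def W_def s_def by blast
  qed
qed

end
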